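(* Let $n=2m$, let $V$ be an $n$-dimensional complex vector space with orthonormal basis $e_1,\ldots,e_n$ for a nondegenerate symmetric bilinear form, $a_{ij}=e_i\wedge e_j\in\Lambda_2(V)$, $A=(a_{ij})_{1\le i,j\le n}\in\operatorname{Mat}_{n,n}(\Lambda(\Lambda_2(V)))$, and $$p=\sum_{\sigma\in S_{2m}}\operatorname{sgn}(\sigma)(A^2)_{\sigma(1)\sigma(2)}\cdots(A^2)_{\sigma(2m-3)\sigma(2m-2)}A_{\sigma(2m-1)\sigma(2m)}.$$ Then $\pi(g)p=\det(g)\,p$ for all $g\in O(V)$, where $\pi$ is the natural action of $O(V)$ on $\Lambda(\Lambda_2(V))$.
   Context: $\Lambda(\Lambda_2(V))$ is the exterior algebra on $\Lambda_2(V)$; its products are exterior products, and all products of entries are taken in the order written. $O(V)$ acts on $\Lambda_2(V)$ naturally and on $\Lambda(\Lambda_2(V))$ by the induced algebra automorphisms $\pi(g)$. *)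

theory Defs
  imports "Jordan_Normal_Form.Determinant" "HOL-Library.Product_Lexorder"
begin

text \<open>Concrete model of the exterior algebra \<Lambda>(\<Lambda>_2(V)), V = C^n with orthonormal
basis e_0,...,e_(n-1). A basis of \<Lambda>_2(V) is e_i\<and>e_j for pairs (i,j), i<j<n.
An element of \<Lambda>(\<Lambda>_2(V)) is a coefficient function on finite sets S of such pairs,
the coefficient of the monomial which is the product of the basis vectors in S
taken in increasing (lexicographic) order.\<close>

type_synonym ext = "(nat \<times> nat) set \<Rightarrow> complex"

definition pairs :: "nat \<Rightarrow> (nat \<times> nat) set" where
  "pairs n = {(i,j). i < j \<and> j < n}"

definition inv_count :: "(nat \<times> nat) set \<Rightarrow> (nat \<times> nat) set \<Rightarrow> nat" where
  "inv_count A B = card {(a,b). a \<in> A \<and> b \<in> B \<and> b < a}"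

definition ext_mult :: "ext \<Rightarrow> ext \<Rightarrow> ext" where
  "ext_mult x y = (\<lambda>S. if finite S then
      (\<Sum>A\<in>Pow S. (-1) ^ inv_count A (S - A) * x A * y (S - A)) else 0)"

definition ext_one :: ext where
  "ext_one = (\<lambda>S. if S = {} then 1 else 0)"

definition ext_scale :: "complex \<Rightarrow> ext \<Rightarrow> ext" where
  "ext_scale c x = (\<lambda>S. c * x S)"

definition ext_sum :: "('i \<Rightarrow> ext) \<Rightarrow> 'i set \<Rightarrow> ext" where
  "ext_sum f I = (\<lambda>S. \<Sum>i\<in>I. f i S)"

definition ext_prod_list :: "ext list \<Rightarrow> ext" where
  "ext_prod_list xs = foldr ext_mult xs ext_one"

text \<open>The element e_i \<and> e_j of \<Lambda>_2(V), viewed in degree one of \<Lambda>(\<Lambda>_2(V)).\<close>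
definition wedge2 :: "nat \<Rightarrow> nat \<Rightarrow> ext" where
  "wedge2 i j = (\<lambda>S. if i < j \<and> S = {(i,j)} then 1
                    else if j < i \<and> S = {(j,i)} then -1 else 0)"

definition A2 :: "nat \<Rightarrow> nat \<Rightarrow> nat \<Rightarrow> ext" where
  "A2 n i j = ext_sum (\<lambda>k. ext_mult (wedge2 i k) (wedge2 k j)) {..<n}"

text \<open>The polynomial p for n = 2m (indices shifted to start at 0).\<close>
definition pf :: "nat \<Rightarrow> ext" where
  "pf m = ext_sum (\<lambda>\<sigma>. ext_scale (of_int (sign \<sigma>))
      (ext_mult (ext_prod_list (map (\<lambda>k. A2 (2*m) (\<sigma> (2*k)) (\<sigma> (2*k+1))) [0..<m-1]))
                (wedge2 (\<sigma> (2*m-2)) (\<sigma> (2*m-1)))))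
     {\<sigma>. \<sigma> permutes {..<2*m}}"

definition img :: "nat \<Rightarrow> complex mat \<Rightarrow> nat \<times> nat \<Rightarrow> ext" where
  "img n g ij = ext_sum (\<lambda>(k,l). ext_scale (g $$ (k, fst ij) * g $$ (l, snd ij)) (wedge2 k l))
                  ({..<n} \<times> {..<n})"

definition mono :: "nat \<Rightarrow> complex mat \<Rightarrow> (nat \<times> nat) set \<Rightarrow> ext" where
  "mono n g S = ext_prod_list (map (img n g) (sorted_list_of_set S))"

definition ext_act :: "nat \<Rightarrow> complex mat \<Rightarrow> ext \<Rightarrow> ext" where
  "ext_act n g x = ext_sum (\<lambda>S. ext_scale (x S) (mono n g S)) (Pow (pairs n))"

end

theory Submission imports Defs begin

definition ev :: "(nat \<times> nat) set \<Rightarrow> ext" where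
  "ev S = (\<lambda>T. if T = S then 1 else 0)"
definition fin :: "ext \<Rightarrow> bool" where
  "fin x \<longleftrightarrow> (\<forall>S. infinite S \<longrightarrow> x S = 0)"
definition deg1 :: "ext \<Rightarrow> bool" where
  "deg1 x \<longleftrightarrow> (\<forall>S. card S \<noteq> 1 \<longrightarrow> x S = 0)"
definition supp :: "nat \<Rightarrow> ext \<Rightarrow> bool" where
  "supp n x \<longleftrightarrow> (\<forall>S. x S \<noteq> 0 \<longrightarrow> S \<subseteq> pairs n)"

lemma finite_pairs: "finite (pairs n)"
  by (rule finite_subset[of _ "{..<n} \<times> {..<n}"]) (auto simp: pairs_def)

lemma inv_count_Un_left:
  assumes "finite B" "finite C" "finite D" "B \<inter> C = {}"
  shows "inv_count (B \<union> C) D = inv_count B D + inv_count C D"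
proof -
  have e: "{(a,b). a \<in> B \<union> C \<and> b \<in> D \<and> b < a} = {(a,b). a \<in> B \<and> b \<in> D \<and> b < a} \<union> {(a,b). a \<in> C \<and> b \<in> D \<and> b < a}" by auto
  have f1: "finite {(a,b). a \<in> B \<and> b \<in> D \<and> b < a}"
    by (rule finite_subset[of _ "B \<times> D"]) (auto simp: assms)
  have f2: "finite {(a,b). a \<in> C \<and> b \<in> D \<and> b < a}"
    by (rule finite_subset[of _ "C \<times> D"]) (auto simp: assms)
  have d: "{(a,b). a \<in> B \<and> b \<in> D \<and> b < a} \<inter> {(a,b). a \<in> C \<and> b \<in> D \<and> b < a} = {}"
    using assms(4) by auto
  show ?thesis unfolding inv_count_def e by (rule card_Un_disjoint[OF f1 f2 d])
qed

lemma inv_count_Un_right: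
  assumes "finite B" "finite C" "finite D" "C \<inter> D = {}"
  shows "inv_count B (C \<union> D) = inv_count B C + inv_count B D"
proof -
  have e: "{(a,b). a \<in> B \<and> b \<in> C \<union> D \<and> b < a} = {(a,b). a \<in> B \<and> b \<in> C \<and> b < a} \<union> {(a,b). a \<in> B \<and> b \<in> D \<and> b < a}" by auto
  have f1: "finite {(a,b). a \<in> B \<and> b \<in> C \<and> b < a}"
    by (rule finite_subset[of _ "B \<times> C"]) (auto simp: assms)
  have f2: "finite {(a,b). a \<in> B \<and> b \<in> D \<and> b < a}"
    by (rule finite_subset[of _ "B \<times> D"]) (auto simp: assms)
  have d: "{(a,b). a \<in> B \<and> b \<in> C \<and> b < a} \<inter> {(a,b). a \<in> B \<and> b \<in> D \<and> b < a} = {}"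
    using assms(4) by auto
  show ?thesis unfolding inv_count_def e by (rule card_Un_disjoint[OF f1 f2 d])
qed

lemma ext_mult_assoc: "ext_mult (ext_mult x y) z = ext_mult x (ext_mult y z)"
proof (rule ext)
  fix S :: "(nat \<times> nat) set"
  show "ext_mult (ext_mult x y) z S = ext_mult x (ext_mult y z) S"
  proof (cases "finite S")
    case False then show ?thesis by (simp add: ext_mult_def)
  next
    case True
    have fs: "\<And>A. A \<subseteq> S \<Longrightarrow> finite A" using True finite_subset by blast
    have "ext_mult (ext_mult x y) z S = (\<Sum>A\<in>Pow S. \<Sum>B\<in>Pow A.
        (-1) ^ inv_count A (S - A) * (-1) ^ inv_count B (A - B) * x B * y (A - B) * z (S - A))"
      using True fs by (auto simp: ext_mult_def sum_distrib_left sum_distrib_right mult.assoc intro!: sum.cong)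
    also have "\<dots> = (\<Sum>(A,B)\<in>Sigma (Pow S) Pow.
        (-1) ^ inv_count A (S - A) * (-1) ^ inv_count B (A - B) * x B * y (A - B) * z (S - A))"
      by (rule sum.Sigma) (use True fs in auto)
    also have "\<dots> = (\<Sum>(B,C)\<in>Sigma (Pow S) (\<lambda>B. Pow (S - B)).
        (-1) ^ inv_count B (S - B) * (-1) ^ inv_count C (S - B - C) * x B * y C * z (S - B - C))"
    proof (rule sum.reindex_bij_witness[where j="\<lambda>(A,B). (B, A - B)" and i="\<lambda>(B,C). (B \<union> C, B)"])
      fix a assume a: "a \<in> Sigma (Pow S) Pow"
      obtain A B where ab: "a = (A, B)" by force
      define C where "C = A - B"
      have AS: "A \<subseteq> S" and BA: "B \<subseteq> A" using a ab by auto
      have A: "A = B \<union> C" using BA C_def by auto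
      have BS: "B \<subseteq> S" and CS: "C \<subseteq> S - B" using AS BA C_def by auto
      have e1: "B \<union> C - B = C" using CS by auto
      have e2: "S - (B \<union> C) = S - B - C" by auto
      have fB: "finite B" "finite C" "finite (S - B - C)" using fs BS CS by auto
      have i1: "inv_count (B \<union> C) (S - B - C) = inv_count B (S - B - C) + inv_count C (S - B - C)"
        by (rule inv_count_Un_left) (use fB CS in auto)
      have e3: "C \<union> (S - B - C) = S - B" using CS by auto
      have "inv_count B (C \<union> (S - B - C)) = inv_count B C + inv_count B (S - B - C)"
        by (rule inv_count_Un_right) (use fB in auto)
      then have i2: "inv_count B (S - B) = inv_count B C + inv_count B (S - B - C)"
        by (simp only: e3)
      show "(\<lambda>(B, C). (-1) ^ inv_count B (S - B) * (-1) ^ inv_count C (S - B - C) * x B * y C * z (S - B - C))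
              ((\<lambda>(A, B). (B, A - B)) a) =
            (\<lambda>(A, B). (-1) ^ inv_count A (S - A) * (-1) ^ inv_count B (A - B) * x B * y (A - B) * z (S - A)) a"
        unfolding ab prod.case A e1 e2 i1 i2 power_add by (simp only: mult_ac)
    next
      fix a assume "a \<in> Sigma (Pow S) Pow"
      then show "(\<lambda>(B, C). (B \<union> C, B)) ((\<lambda>(A, B). (B, A - B)) a) = a" by (cases a) auto
    next
      fix a assume "a \<in> Sigma (Pow S) Pow"
      then show "(\<lambda>(A, B). (B, A - B)) a \<in> Sigma (Pow S) (\<lambda>B. Pow (S - B))" by (cases a) auto
    next
      fix b assume "b \<in> Sigma (Pow S) (\<lambda>B. Pow (S - B))"
      then show "(\<lambda>(A, B). (B, A - B)) ((\<lambda>(B, C). (B \<union> C, B)) b) = b" by (cases b) auto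
    next
      fix b assume "b \<in> Sigma (Pow S) (\<lambda>B. Pow (S - B))"
      then show "(\<lambda>(B, C). (B \<union> C, B)) b \<in> Sigma (Pow S) Pow" by (cases b) auto
    qed
    also have "\<dots> = (\<Sum>B\<in>Pow S. \<Sum>C\<in>Pow (S - B).
        (-1) ^ inv_count B (S - B) * (-1) ^ inv_count C (S - B - C) * x B * y C * z (S - B - C))"
      by (rule sum.Sigma[symmetric]) (use True in auto)
    also have "\<dots> = ext_mult x (ext_mult y z) S"
      using True fs by (auto simp: ext_mult_def sum_distrib_left sum_distrib_right mult.assoc intro!: sum.cong)
    finally show ?thesis .
  qed
qed

lemma ext_mult_sum_left: "finite I \<Longrightarrow> ext_mult (ext_sum f I) y = ext_sum (\<lambda>i. ext_mult (f i) y) I"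
  by (rule ext) (auto simp: ext_mult_def ext_sum_def sum_distrib_left sum_distrib_right intro: sum.swap)

lemma ext_mult_sum_right: "finite I \<Longrightarrow> ext_mult x (ext_sum f I) = ext_sum (\<lambda>i. ext_mult x (f i)) I"
  by (rule ext) (auto simp: ext_mult_def ext_sum_def sum_distrib_left sum_distrib_right intro: sum.swap)

lemma ext_mult_scale_left: "ext_mult (ext_scale c x) y = ext_scale c (ext_mult x y)"
  by (rule ext) (auto simp: ext_mult_def ext_scale_def sum_distrib_left mult_ac)

lemma ext_mult_scale_right: "ext_mult x (ext_scale c y) = ext_scale c (ext_mult x y)"
  by (rule ext) (auto simp: ext_mult_def ext_scale_def sum_distrib_left mult_ac)

lemma ext_scale_scale[simp]: "ext_scale a (ext_scale b x) = ext_scale (a * b) x"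
  by (rule ext) (simp add: ext_scale_def)

lemma ext_scale_1[simp]: "ext_scale 1 x = x"
  by (rule ext) (simp add: ext_scale_def)

lemma fin_mult: "fin (ext_mult x y)"
  by (simp add: fin_def ext_mult_def)

lemma fin_one: "fin ext_one"
  by (auto simp: fin_def ext_one_def)

lemma inv_count_empty[simp]: "inv_count {} S = 0" "inv_count S {} = 0"
  by (auto simp: inv_count_def)

lemma ext_one_left: "fin y \<Longrightarrow> ext_mult ext_one y = y"
proof (rule ext)
  fix S assume f: "fin y"
  show "ext_mult ext_one y S = y S"
  proof (cases "finite S")
    case False then show ?thesis using f by (simp add: ext_mult_def fin_def)
  next
    case True
    have "ext_mult ext_one y S = (\<Sum>A\<in>Pow S. (-1) ^ inv_count A (S - A) * ext_one A * y (S - A))"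
      using True by (simp add: ext_mult_def)
    also have "\<dots> = (\<Sum>A\<in>Pow S. if A = {} then y S else 0)"
      by (rule sum.cong[OF refl]) (auto simp: ext_one_def)
    also have "\<dots> = y S" using True by (simp add: sum.delta)
    finally show ?thesis .
  qed
qed

lemma ext_one_right: "fin x \<Longrightarrow> ext_mult x ext_one = x"
proof (rule ext)
  fix S assume f: "fin x"
  show "ext_mult x ext_one S = x S"
  proof (cases "finite S")
    case False then show ?thesis using f by (simp add: ext_mult_def fin_def)
  next
    case True
    have "ext_mult x ext_one S = (\<Sum>A\<in>Pow S. (-1) ^ inv_count A (S - A) * x A * ext_one (S - A))"
      using True by (simp add: ext_mult_def)
    also have "\<dots> = (\<Sum>A\<in>Pow S. if A = S then x S else 0)"
      by (rule sum.cong[OF refl]) (auto simp: ext_one_def)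
    also have "\<dots> = x S" using True by (simp add: sum.delta)
    finally show ?thesis .
  qed
qed

lemma deg1_mult_singletons:
  assumes "deg1 x" "deg1 y" "finite S"
  shows "ext_mult x y S = (\<Sum>p\<in>S. (-1) ^ inv_count {p} (S - {p}) * x {p} * y (S - {p}))"
proof -
  have "ext_mult x y S = (\<Sum>A\<in>Pow S. (-1) ^ inv_count A (S - A) * x A * y (S - A))"
    using assms by (simp add: ext_mult_def)
  also have "\<dots> = (\<Sum>A\<in>(\<lambda>p. {p}) ` S. (-1) ^ inv_count A (S - A) * x A * y (S - A))"
  proof (rule sum.mono_neutral_right)
    show "finite (Pow S)" using assms by simp
    show "(\<lambda>p. {p}) ` S \<subseteq> Pow S" by auto
    show "\<forall>i\<in>Pow S - (\<lambda>p. {p}) ` S. (-1) ^ inv_count i (S - i) * x i * y (S - i) = 0"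
    proof
      fix A assume "A \<in> Pow S - (\<lambda>p. {p}) ` S"
      then have "card A \<noteq> 1" by (auto simp: card_1_singleton_iff)
      then show "(-1) ^ inv_count A (S - A) * x A * y (S - A) = 0" using assms(1) by (simp add: deg1_def)
    qed
  qed
  also have "\<dots> = (\<Sum>p\<in>S. (-1) ^ inv_count {p} (S - {p}) * x {p} * y (S - {p}))"
    by (subst sum.reindex) (auto simp: inj_on_def)
  finally show ?thesis .
qed

lemma inv_count_single: "inv_count {p} {q} = (if q < p then 1 else 0)"
proof -
  have "{(a,b). a \<in> {p} \<and> b \<in> {q} \<and> b < a} = (if q < p then {(p,q)} else {})" by auto
  then show ?thesis by (simp add: inv_count_def)
qed

lemma deg1_anticomm:
  assumes x: "deg1 x" and y: "deg1 y"
  shows "ext_mult x y = ext_scale (-1) (ext_mult y x)"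
proof (rule ext)
  fix S :: "(nat \<times> nat) set"
  show "ext_mult x y S = ext_scale (-1) (ext_mult y x) S"
  proof (cases "finite S")
    case False then show ?thesis by (simp add: ext_mult_def ext_scale_def)
  next
    case True
    note e = deg1_mult_singletons[OF x y True] deg1_mult_singletons[OF y x True]
    show ?thesis
    proof (cases "card S = 2")
      case False
      have z: "\<And>p z. deg1 z \<Longrightarrow> p \<in> S \<Longrightarrow> z (S - {p}) = 0"
        using False True by (auto simp: deg1_def)
      show ?thesis unfolding e ext_scale_def using z[OF x] z[OF y] by simp
    next
      case True
      then obtain p q where S: "S = {p, q}" and pq: "p \<noteq> q" by (auto simp: card_2_iff)
      have d1: "{p, q} - {p} = {q}" "{p, q} - {q} = {p}" using pq by auto
      have "p < q \<or> q < p" using pq by auto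
      then show ?thesis unfolding ext_scale_def apply (subst e(1), subst e(2)) unfolding S using pq
        by (auto simp: d1 inv_count_single algebra_simps)
    qed
  qed
qed

lemma deg1_sq: "deg1 x \<Longrightarrow> ext_mult x x = (\<lambda>_. 0)"
proof (rule ext)
  fix S assume "deg1 x"
  from deg1_anticomm[OF this this] have "ext_mult x x S = - ext_mult x x S"
    by (metis ext_scale_def mult_minus1)
  then show "ext_mult x x S = 0" by simp
qed

lemma deg1_wedge2: "deg1 (wedge2 i j)"
  by (auto simp: deg1_def wedge2_def)

lemma deg1_scale: "deg1 x \<Longrightarrow> deg1 (ext_scale c x)"
  by (auto simp: deg1_def ext_scale_def)

lemma deg1_sum: "(\<And>i. i \<in> I \<Longrightarrow> deg1 (f i)) \<Longrightarrow> deg1 (ext_sum f I)"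
  by (auto simp: deg1_def ext_sum_def)

lemma deg1_img: "deg1 (img n g a)"
  unfolding img_def by (rule deg1_sum) (auto intro: deg1_scale deg1_wedge2)

lemma deg1_fin: "deg1 x \<Longrightarrow> fin x"
  by (auto simp: deg1_def fin_def)

lemma ext_mult_zero_left[simp]: "ext_mult (\<lambda>_. 0) y = (\<lambda>_. 0)"
  by (rule ext) (simp add: ext_mult_def)

lemma ext_mult_zero_right[simp]: "ext_mult x (\<lambda>_. 0) = (\<lambda>_. 0)"
  by (rule ext) (simp add: ext_mult_def)

lemma ext_scale_zero[simp]: "ext_scale c (\<lambda>_. 0) = (\<lambda>_. 0)"
  by (rule ext) (simp add: ext_scale_def)

lemma fin_prod: "fin (ext_prod_list xs)"
  by (cases xs) (auto simp: ext_prod_list_def fin_one fin_mult)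

lemma foldr_mult: "fin z \<Longrightarrow> foldr ext_mult xs z = ext_mult (ext_prod_list xs) z"
proof (induction xs)
  case Nil then show ?case by (simp add: ext_prod_list_def ext_one_left)
next
  case (Cons x xs) then show ?case by (simp add: ext_prod_list_def ext_mult_assoc)
qed

lemma prod_append: "ext_prod_list (xs @ ys) = ext_mult (ext_prod_list xs) (ext_prod_list ys)"
  using foldr_mult[OF fin_prod[of ys], of xs] by (simp add: ext_prod_list_def)

lemma prod_Cons: "ext_prod_list (x # xs) = ext_mult x (ext_prod_list xs)"
  by (simp add: ext_prod_list_def)

lemma prod_Nil: "ext_prod_list [] = ext_one"
  by (simp add: ext_prod_list_def)

lemma insert_prod:
  assumes v: "\<And>b. deg1 (v b)" and s: "sorted_wrt (<) xs"
  shows "ext_mult (v a) (ext_prod_list (map v xs)) =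
    (if a \<in> set xs then (\<lambda>_. 0)
     else ext_scale ((-1) ^ length (filter (\<lambda>b. b < a) xs)) (ext_prod_list (map v (insort a xs))))"
  using s
proof (induction xs)
  case Nil then show ?case by (simp add: prod_Cons prod_Nil)
next
  case (Cons b xs)
  have sb: "\<forall>y\<in>set xs. b < y" and sxs: "sorted_wrt (<) xs" using Cons.prems by auto
  note IH = Cons.IH[OF sxs]
  let ?P = "ext_prod_list (map v xs)"
  have lhs: "ext_mult (v a) (ext_prod_list (map v (b # xs))) = ext_mult (ext_mult (v a) (v b)) ?P"
    by (simp add: prod_Cons ext_mult_assoc)
  consider "a = b" | "a < b" | "b < a" by fastforce
  then show ?case
  proof cases
    case 1
    then show ?thesis unfolding lhs using deg1_sq[OF v] by simp
  next
    case 2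
    have "a \<notin> set (b # xs)" using 2 sb by auto
    moreover have "filter (\<lambda>c. c < a) (b # xs) = []" using 2 sb by (auto simp: filter_empty_conv)
    moreover have "insort a (b # xs) = a # b # xs" using 2 by (simp add: less_imp_le)
    ultimately show ?thesis by (simp add: prod_Cons)
  next
    case 3
    have "ext_mult (v a) (ext_prod_list (map v (b # xs))) = ext_scale (-1) (ext_mult (v b) (ext_mult (v a) ?P))"
      unfolding lhs deg1_anticomm[OF v v, of a b] ext_mult_scale_left ext_mult_assoc ..
    also have "\<dots> = (if a \<in> set (b # xs) then (\<lambda>_. 0)
     else ext_scale ((-1) ^ length (filter (\<lambda>c. c < a) (b # xs))) (ext_prod_list (map v (insort a (b # xs)))))"
      unfolding IH using 3 by (auto simp: ext_mult_scale_right prod_Cons)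
    finally show ?thesis .
  qed
qed

lemma ev_mult_single:
  assumes B: "finite B"
  shows "ext_mult (ev {a}) (ev B) = (if a \<in> B then (\<lambda>_. 0) else ext_scale ((-1) ^ inv_count {a} B) (ev (insert a B)))"
proof (rule ext)
  fix T :: "(nat \<times> nat) set"
  show "ext_mult (ev {a}) (ev B) T = (if a \<in> B then (\<lambda>_. 0) else ext_scale ((-1) ^ inv_count {a} B) (ev (insert a B))) T"
  proof (cases "finite T")
    case False
    then have "T \<noteq> insert a B" using B by auto
    then show ?thesis using False by (simp add: ext_mult_def ev_def ext_scale_def)
  next
    case True
    have "ext_mult (ev {a}) (ev B) T = (\<Sum>A\<in>Pow T. (-1) ^ inv_count A (T - A) * ev {a} A * ev B (T - A))"
      using True by (simp add: ext_mult_def)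
    also have "\<dots> = (\<Sum>A\<in>Pow T. if A = {a} then (if T - {a} = B then (-1) ^ inv_count {a} B else 0) else 0)"
      by (rule sum.cong[OF refl]) (auto simp: ev_def)
    also have "\<dots> = (if a \<in> T \<and> T - {a} = B then (-1) ^ inv_count {a} B else 0)"
      using True by (simp add: sum.delta)
    also have "\<dots> = (if a \<in> B then (\<lambda>_. 0) else ext_scale ((-1) ^ inv_count {a} B) (ev (insert a B))) T"
      by (auto simp: ext_scale_def ev_def)
    finally show ?thesis .
  qed
qed

lemma ev_empty: "ev {} = ext_one"
  by (rule ext) (simp add: ev_def ext_one_def)

lemma ev_prod_sorted: "sorted_wrt (<) xs \<Longrightarrow> ext_prod_list (map (\<lambda>a. ev {a}) xs) = ev (set xs)"
proof (induction xs)
  case Nil then show ?case by (simp add: prod_Nil ev_empty)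
next
  case (Cons a xs)
  then have IH: "ext_prod_list (map (\<lambda>a. ev {a}) xs) = ev (set xs)" and sa: "\<forall>y\<in>set xs. a < y" by auto
  then have na: "a \<notin> set xs" by auto
  have "{(aa, b). aa \<in> {a} \<and> b \<in> set xs \<and> b < aa} = {}" using sa less_asym by blast
  then have "inv_count {a} (set xs) = 0" by (simp only: inv_count_def card.empty)
  then show ?case using na by (simp add: prod_Cons IH ev_mult_single)
qed

lemma act_sum: "finite I \<Longrightarrow> ext_act n g (ext_sum f I) = ext_sum (\<lambda>i. ext_act n g (f i)) I"
  by (rule ext) (auto simp: ext_act_def ext_sum_def ext_scale_def sum_distrib_right intro: sum.swap)

lemma act_scale: "ext_act n g (ext_scale c x) = ext_scale c (ext_act n g x)"
  by (rule ext) (auto simp: ext_act_def ext_sum_def ext_scale_def sum_distrib_left mult_ac)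

lemma act_zero: "ext_act n g (\<lambda>_. 0) = (\<lambda>_. 0)"
  by (rule ext) (auto simp: ext_act_def ext_sum_def ext_scale_def)

lemma act_ev: "B \<subseteq> pairs n \<Longrightarrow> ext_act n g (ev B) = Defs.mono n g B"
proof (rule ext)
  fix T assume B: "B \<subseteq> pairs n"
  have "ext_act n g (ev B) T = (\<Sum>S\<in>Pow (pairs n). if S = B then Defs.mono n g B T else 0)"
    unfolding ext_act_def ext_sum_def ext_scale_def by (rule sum.cong) (auto simp: ev_def)
  also have "\<dots> = Defs.mono n g B T" using B finite_pairs by (simp add: sum.delta)
  finally show "ext_act n g (ev B) T = Defs.mono n g B T" .
qed

lemma supp_decomp: "supp n x \<Longrightarrow> x = ext_sum (\<lambda>S. ext_scale (x S) (ev S)) (Pow (pairs n))"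
proof (rule ext)
  fix T assume x: "supp n x"
  have "ext_sum (\<lambda>S. ext_scale (x S) (ev S)) (Pow (pairs n)) T = (\<Sum>S\<in>Pow (pairs n). if S = T then x T else 0)"
    unfolding ext_sum_def ext_scale_def by (rule sum.cong) (auto simp: ev_def)
  also have "\<dots> = x T" using x finite_pairs by (auto simp: sum.delta' supp_def)
  finally show "x T = ext_sum (\<lambda>S. ext_scale (x S) (ev S)) (Pow (pairs n)) T" by simp
qed

lemma supp_mult: "supp n x \<Longrightarrow> supp n y \<Longrightarrow> supp n (ext_mult x y)"
proof (unfold supp_def, intro allI impI)
  fix S assume x: "\<forall>S. x S \<noteq> 0 \<longrightarrow> S \<subseteq> pairs n" and y: "\<forall>S. y S \<noteq> 0 \<longrightarrow> S \<subseteq> pairs n"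
    and ne: "ext_mult x y S \<noteq> 0"
  then have "finite S" by (auto simp: ext_mult_def split: if_splits)
  with ne obtain A where "A \<subseteq> S" "x A \<noteq> 0" "y (S - A) \<noteq> 0"
    by (auto simp: ext_mult_def elim!: sum.not_neutral_contains_not_neutral)
  with x y show "S \<subseteq> pairs n" by blast
qed

lemma supp_ev: "B \<subseteq> pairs n \<Longrightarrow> supp n (ev B)"
  by (auto simp: supp_def ev_def)

lemma supp_one: "supp n ext_one"
  by (auto simp: supp_def ext_one_def)

lemma supp_scale: "supp n x \<Longrightarrow> supp n (ext_scale c x)"
  by (auto simp: supp_def ext_scale_def)

lemma supp_sum: "(\<And>i. i \<in> I \<Longrightarrow> supp n (f i)) \<Longrightarrow> supp n (ext_sum f I)"
  unfolding supp_def ext_sum_def by (metis (no_types, lifting) sum.neutral)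

lemma supp_prod: "(\<And>x. x \<in> set xs \<Longrightarrow> supp n x) \<Longrightarrow> supp n (ext_prod_list xs)"
  by (induction xs) (auto simp: prod_Nil prod_Cons supp_one supp_mult)

lemma supp_wedge2: "i < n \<Longrightarrow> j < n \<Longrightarrow> supp n (wedge2 i j)"
  by (auto simp: supp_def wedge2_def pairs_def)

lemma inv_count_single_left: "finite S \<Longrightarrow> inv_count {a} S = length (filter (\<lambda>b. b < a) (sorted_list_of_set S))"
proof -
  assume S: "finite S"
  have "{(a', b). a' \<in> {a} \<and> b \<in> S \<and> b < a'} = (\<lambda>b. (a, b)) ` ({b. b < a} \<inter> S)" by auto
  then have "inv_count {a} S = card ({b. b < a} \<inter> S)"
    unfolding inv_count_def by (simp add: card_image inj_on_def)
  also have "\<dots> = length (filter (\<lambda>b. b < a) (sorted_list_of_set S))"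
    using S by (simp add: distinct_length_filter)
  finally show ?thesis .
qed

lemma act_ev_single_ev:
  assumes a: "a \<in> pairs n" and B: "B \<subseteq> pairs n"
  shows "ext_act n g (ext_mult (ev {a}) (ev B)) = ext_mult (img n g a) (Defs.mono n g B)"
proof -
  have fB: "finite B" using B finite_pairs finite_subset by blast
  have ins: "ext_mult (img n g a) (Defs.mono n g B) =
    (if a \<in> set (sorted_list_of_set B) then (\<lambda>_. 0)
     else ext_scale ((-1) ^ length (filter (\<lambda>b. b < a) (sorted_list_of_set B)))
            (ext_prod_list (map (img n g) (insort a (sorted_list_of_set B)))))"
    unfolding Defs.mono_def by (rule insert_prod) (auto simp: deg1_img)
  show ?thesis
  proof (cases "a \<in> B")
    case True
    then show ?thesis using fB by (simp add: ins ev_mult_single act_zero)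
  next
    case False
    have "ext_act n g (ext_mult (ev {a}) (ev B)) = ext_scale ((-1) ^ inv_count {a} B) (Defs.mono n g (insert a B))"
      using False fB a B by (simp add: ev_mult_single act_scale act_ev)
    also have "\<dots> = ext_mult (img n g a) (Defs.mono n g B)"
      unfolding ins using False fB by (simp add: inv_count_single_left Defs.mono_def sorted_list_of_set_insert)
    finally show ?thesis .
  qed
qed

lemma act_ev_single:
  assumes a: "a \<in> pairs n" and y: "supp n y"
  shows "ext_act n g (ext_mult (ev {a}) y) = ext_mult (img n g a) (ext_act n g y)"
proof -
  have fp: "finite (Pow (pairs n))" using finite_pairs by simp
  have "ext_act n g (ext_mult (ev {a}) (ext_sum (\<lambda>S. ext_scale (y S) (ev S)) (Pow (pairs n))))
     = ext_sum (\<lambda>S. ext_scale (y S) (ext_act n g (ext_mult (ev {a}) (ev S)))) (Pow (pairs n))"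
    by (simp only: ext_mult_sum_right[OF fp] act_sum[OF fp] ext_mult_scale_right act_scale)
  then have "ext_act n g (ext_mult (ev {a}) y) = ext_sum (\<lambda>S. ext_scale (y S) (ext_act n g (ext_mult (ev {a}) (ev S)))) (Pow (pairs n))"
    using supp_decomp[OF y] by simp
  also have "\<dots> = ext_sum (\<lambda>S. ext_scale (y S) (ext_mult (img n g a) (Defs.mono n g S))) (Pow (pairs n))"
    unfolding ext_sum_def using act_ev_single_ev[OF a] by (auto intro!: ext sum.cong)
  also have "\<dots> = ext_mult (img n g a) (ext_act n g y)"
    unfolding ext_act_def by (simp only: ext_mult_sum_right[OF fp] ext_mult_scale_right)
  finally show ?thesis .
qed

lemma supp_fin: "supp n x \<Longrightarrow> fin x"
  unfolding supp_def fin_def using finite_pairs finite_subset by blast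

lemma fin_act: "fin (ext_act n g x)"
  using fin_prod by (auto simp: fin_def ext_act_def ext_sum_def ext_scale_def Defs.mono_def)

lemma act_ev_list:
  assumes "set xs \<subseteq> pairs n" and y: "supp n y"
  shows "ext_act n g (ext_mult (ext_prod_list (map (\<lambda>a. ev {a}) xs)) y) = ext_mult (ext_prod_list (map (img n g) xs)) (ext_act n g y)"
  using assms(1)
proof (induction xs)
  case Nil
  then show ?case using y by (simp add: prod_Nil ext_one_left supp_fin fin_act)
next
  case (Cons a xs)
  have s: "supp n (ext_mult (ext_prod_list (map (\<lambda>a. ev {a}) xs)) y)"
    using Cons.prems y by (auto intro!: supp_mult supp_prod supp_ev)
  show ?case using Cons by (simp add: prod_Cons ext_mult_assoc act_ev_single[OF _ s])
qed

lemma act_ev_mult: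
  assumes S: "S \<subseteq> pairs n" and y: "supp n y"
  shows "ext_act n g (ext_mult (ev S) y) = ext_mult (Defs.mono n g S) (ext_act n g y)"
proof -
  have fS: "finite S" using S finite_pairs finite_subset by blast
  have "ev S = ext_prod_list (map (\<lambda>a. ev {a}) (sorted_list_of_set S))"
    using ev_prod_sorted[of "sorted_list_of_set S"] fS by simp
  then show ?thesis using act_ev_list[of "sorted_list_of_set S" n y g] S y fS
    by (simp add: Defs.mono_def)
qed

lemma act_hom:
  assumes x: "supp n x" and y: "supp n y"
  shows "ext_act n g (ext_mult x y) = ext_mult (ext_act n g x) (ext_act n g y)"
proof -
  have fp: "finite (Pow (pairs n))" using finite_pairs by simp
  have "ext_act n g (ext_mult (ext_sum (\<lambda>S. ext_scale (x S) (ev S)) (Pow (pairs n))) y)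
    = ext_sum (\<lambda>S. ext_scale (x S) (ext_act n g (ext_mult (ev S) y))) (Pow (pairs n))"
    by (simp only: ext_mult_sum_left[OF fp] act_sum[OF fp] ext_mult_scale_left act_scale)
  also have "\<dots> = ext_sum (\<lambda>S. ext_scale (x S) (ext_mult (Defs.mono n g S) (ext_act n g y))) (Pow (pairs n))"
    unfolding ext_sum_def using act_ev_mult[OF _ y] by (auto intro!: ext sum.cong)
  also have "\<dots> = ext_mult (ext_act n g x) (ext_act n g y)"
    unfolding ext_act_def by (simp only: ext_mult_sum_left[OF fp] ext_mult_scale_left)
  finally show ?thesis using supp_decomp[OF x] by simp
qed

lemma act_one: "ext_act n g ext_one = ext_one"
  using act_ev[of "{}" n g] by (simp add: ev_empty Defs.mono_def prod_Nil)

lemma wedge2_swap: "wedge2 l k = ext_scale (-1) (wedge2 k l)"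
  by (rule ext) (auto simp: wedge2_def ext_scale_def)

lemma img_eq: "img n g (i, j) = ext_sum (\<lambda>k. ext_sum (\<lambda>l. ext_scale (g $$ (k, i) * g $$ (l, j)) (wedge2 k l)) {..<n}) {..<n}"
  unfolding img_def ext_sum_def by (rule ext) (simp add: sum.cartesian_product case_prod_beta)

lemma ext_sum_scale_out: "ext_sum (\<lambda>i. ext_scale c (f i)) I = ext_scale c (ext_sum f I)"
  by (rule ext) (simp add: ext_sum_def ext_scale_def sum_distrib_left)

lemma img_antisym: "img n g (i, j) = ext_scale (-1) (img n g (j, i))"
proof -
  have "img n g (j, i) = ext_sum (\<lambda>l. ext_sum (\<lambda>k. ext_scale (g $$ (l, j) * g $$ (k, i)) (wedge2 l k)) {..<n}) {..<n}"
    by (rule img_eq)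
  also have "\<dots> = ext_sum (\<lambda>k. ext_sum (\<lambda>l. ext_scale (g $$ (l, j) * g $$ (k, i)) (wedge2 l k)) {..<n}) {..<n}"
    unfolding ext_sum_def by (rule ext) (rule sum.swap)
  also have "\<dots> = ext_sum (\<lambda>k. ext_sum (\<lambda>l. ext_scale (-1) (ext_scale (g $$ (k, i) * g $$ (l, j)) (wedge2 k l))) {..<n}) {..<n}"
    unfolding ext_sum_def by (intro ext sum.cong refl) (auto simp: ext_scale_def wedge2_def)
  also have "\<dots> = ext_scale (-1) (img n g (i, j))"
    unfolding img_eq ext_sum_scale_out ..
  finally have "img n g (j, i) = ext_scale (-1) (img n g (i, j))" .
  then show ?thesis by simp
qed

lemma act_wedge2:
  assumes "i < n" "j < n"
  shows "ext_act n g (wedge2 i j) = img n g (i, j)"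
proof -
  consider "i < j" | "j < i" | "i = j" by fastforce
  then show ?thesis
  proof cases
    case 1
    then have "wedge2 i j = ev {(i, j)}" by (auto simp: wedge2_def ev_def)
    moreover have "(i, j) \<in> pairs n" using 1 assms by (simp add: pairs_def)
    ultimately show ?thesis
      by (simp add: act_ev Defs.mono_def prod_Cons prod_Nil ext_one_right deg1_fin deg1_img)
  next
    case 2
    then have "wedge2 i j = ext_scale (-1) (ev {(j, i)})" by (auto simp: wedge2_def ev_def ext_scale_def)
    moreover have "(j, i) \<in> pairs n" using 2 assms by (simp add: pairs_def)
    ultimately show ?thesis using img_antisym[of n g i j]
      by (simp add: act_scale act_ev Defs.mono_def prod_Cons prod_Nil ext_one_right deg1_fin deg1_img)
  next
    case 3
    then have "wedge2 i j = (\<lambda>_. 0)" by (auto simp: wedge2_def)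
    moreover have "img n g (i, i) = (\<lambda>_. 0)"
    proof (rule ext)
      fix T
      have "img n g (i, i) T = - img n g (i, i) T" using img_antisym[of n g i i] by (metis ext_scale_def mult_minus1)
      then show "img n g (i, i) T = 0" by simp
    qed
    ultimately show ?thesis using 3 by (simp add: act_zero)
  qed
qed

lemma ext_sum_swap: "ext_sum (\<lambda>i. ext_sum (\<lambda>j. f i j) J) I = ext_sum (\<lambda>j. ext_sum (\<lambda>i. f i j) I) J"
  unfolding ext_sum_def by (rule ext) (rule sum.swap)

lemma ext_sum_cong: "(\<And>i. i \<in> I \<Longrightarrow> f i = h i) \<Longrightarrow> ext_sum f I = ext_sum h I"
  unfolding ext_sum_def by (intro ext sum.cong refl) auto

lemma ext_sum_cart: "ext_sum (\<lambda>(p, s). f p s) (I \<times> J) = ext_sum (\<lambda>p. ext_sum (\<lambda>s. f p s) J) I"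
  unfolding ext_sum_def by (rule ext) (simp add: sum.cartesian_product case_prod_beta)

lemma ext_sum_scale_const: "ext_sum (\<lambda>c. ext_scale (f c) X) I = ext_scale (sum f I) X"
  unfolding ext_sum_def ext_scale_def by (rule ext) (simp add: sum_distrib_right)

lemma contraction:
  fixes g :: "complex mat"
  assumes orth: "\<And>q r. q < n \<Longrightarrow> r < n \<Longrightarrow> (\<Sum>c<n. g $$ (q, c) * g $$ (r, c)) = (if q = r then 1 else 0)"
  shows "ext_sum (\<lambda>c. ext_mult (ext_sum (\<lambda>q. ext_scale (g $$ (q, c)) (u q)) {..<n})
                                (ext_sum (\<lambda>r. ext_scale (g $$ (r, c)) (v r)) {..<n})) {..<n}
       = ext_sum (\<lambda>q. ext_mult (u q) (v q)) {..<n}"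
proof -
  have f: "finite {..<n}" by simp
  have "ext_sum (\<lambda>c. ext_mult (ext_sum (\<lambda>q. ext_scale (g $$ (q, c)) (u q)) {..<n})
                                (ext_sum (\<lambda>r. ext_scale (g $$ (r, c)) (v r)) {..<n})) {..<n}
     = ext_sum (\<lambda>c. ext_sum (\<lambda>r. ext_sum (\<lambda>q. ext_scale (g $$ (r, c) * g $$ (q, c)) (ext_mult (u q) (v r))) {..<n}) {..<n}) {..<n}"
    by (simp only: ext_mult_sum_left[OF f] ext_mult_sum_right[OF f] ext_mult_scale_left ext_mult_scale_right ext_scale_scale ext_sum_scale_out[symmetric])
  also have "\<dots> = ext_sum (\<lambda>r. ext_sum (\<lambda>c. ext_sum (\<lambda>q. ext_scale (g $$ (r, c) * g $$ (q, c)) (ext_mult (u q) (v r))) {..<n}) {..<n}) {..<n}"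
    by (rule ext_sum_swap)
  also have "\<dots> = ext_sum (\<lambda>r. ext_sum (\<lambda>q. ext_sum (\<lambda>c. ext_scale (g $$ (r, c) * g $$ (q, c)) (ext_mult (u q) (v r))) {..<n}) {..<n}) {..<n}"
    by (rule ext_sum_cong) (rule ext_sum_swap)
  also have "\<dots> = ext_sum (\<lambda>r. ext_sum (\<lambda>q. ext_scale (if r = q then 1 else 0) (ext_mult (u q) (v r))) {..<n}) {..<n}"
    by (intro ext_sum_cong) (simp add: ext_sum_scale_const orth)
  also have "\<dots> = ext_sum (\<lambda>q. ext_mult (u q) (v q)) {..<n}"
  proof (intro ext_sum_cong ext)
    fix r S assume "r \<in> {..<n}"
    have "(\<Sum>q<n. (if r = q then 1 else 0) * ext_mult (u q) (v r) S) = (\<Sum>q<n. if r = q then ext_mult (u q) (v r) S else 0)"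
      by (rule sum.cong) auto
    also have "\<dots> = ext_mult (u r) (v r) S" using \<open>r \<in> {..<n}\<close> by (simp add: sum.delta)
    finally show "ext_sum (\<lambda>q. ext_scale (if r = q then 1 else 0) (ext_mult (u q) (v r))) {..<n} S = ext_mult (u r) (v r) S"
      by (simp add: ext_sum_def ext_scale_def)
  qed
  finally show ?thesis .
qed

definition cov :: "nat \<Rightarrow> complex mat \<Rightarrow> (nat \<Rightarrow> nat \<Rightarrow> ext) \<Rightarrow> bool" where
  "cov n g F \<longleftrightarrow> (\<forall>a b. a < n \<longrightarrow> b < n \<longrightarrow>
     ext_act n g (F a b) = ext_sum (\<lambda>(p, q). ext_scale (g $$ (p, a) * g $$ (q, b)) (F p q)) ({..<n} \<times> {..<n})
     \<and> supp n (F a b))"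

lemma cov_wedge2: "cov n g wedge2"
  unfolding cov_def using act_wedge2 supp_wedge2 by (simp add: img_def)

lemma supp_A2: "a < n \<Longrightarrow> b < n \<Longrightarrow> supp n (A2 n a b)"
  unfolding A2_def by (auto intro!: supp_sum supp_mult supp_wedge2)

lemma cov_A2:
  fixes g :: "complex mat"
  assumes orth: "\<And>q r. q < n \<Longrightarrow> r < n \<Longrightarrow> (\<Sum>c<n. g $$ (q, c) * g $$ (r, c)) = (if q = r then 1 else 0)"
  shows "cov n g (A2 n)"
  unfolding cov_def
proof (intro allI impI conjI)
  fix a b assume a: "a < n" and b: "b < n"
  show "supp n (A2 n a b)" using a b by (rule supp_A2)
  have f: "finite {..<n}" by simp
  define u where "u q = ext_sum (\<lambda>p. ext_scale (g $$ (p, a)) (wedge2 p q)) {..<n}" for q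
  define v where "v r = ext_sum (\<lambda>s. ext_scale (g $$ (s, b)) (wedge2 r s)) {..<n}" for r
  have i1: "img n g (a, c) = ext_sum (\<lambda>q. ext_scale (g $$ (q, c)) (u q)) {..<n}" for c
  proof -
    have "img n g (a, c) = ext_sum (\<lambda>q. ext_sum (\<lambda>p. ext_scale (g $$ (p, a) * g $$ (q, c)) (wedge2 p q)) {..<n}) {..<n}"
      unfolding img_eq by (rule ext_sum_swap)
    then show ?thesis unfolding u_def ext_sum_scale_out[symmetric] by (simp add: mult_ac)
  qed
  have i2: "img n g (c, b) = ext_sum (\<lambda>r. ext_scale (g $$ (r, c)) (v r)) {..<n}" for c
    unfolding img_eq v_def ext_sum_scale_out[symmetric] by simp
  have "ext_act n g (A2 n a b) = ext_sum (\<lambda>c. ext_mult (img n g (a, c)) (img n g (c, b))) {..<n}"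
    unfolding A2_def act_sum[OF f] using a b
    by (intro ext_sum_cong) (simp add: act_hom supp_wedge2 act_wedge2)
  also have "\<dots> = ext_sum (\<lambda>q. ext_mult (u q) (v q)) {..<n}"
    unfolding i1 i2 by (rule contraction[OF orth])
  also have "\<dots> = ext_sum (\<lambda>q. ext_sum (\<lambda>s. ext_sum (\<lambda>p. ext_scale (g $$ (s, b) * g $$ (p, a)) (ext_mult (wedge2 p q) (wedge2 q s))) {..<n}) {..<n}) {..<n}"
    unfolding u_def v_def
    by (simp only: ext_mult_sum_left[OF f] ext_mult_sum_right[OF f] ext_mult_scale_left ext_mult_scale_right ext_scale_scale ext_sum_scale_out[symmetric])
  also have "\<dots> = ext_sum (\<lambda>s. ext_sum (\<lambda>q. ext_sum (\<lambda>p. ext_scale (g $$ (s, b) * g $$ (p, a)) (ext_mult (wedge2 p q) (wedge2 q s))) {..<n}) {..<n}) {..<n}"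
    by (rule ext_sum_swap)
  also have "\<dots> = ext_sum (\<lambda>s. ext_sum (\<lambda>p. ext_sum (\<lambda>q. ext_scale (g $$ (s, b) * g $$ (p, a)) (ext_mult (wedge2 p q) (wedge2 q s))) {..<n}) {..<n}) {..<n}"
    by (rule ext_sum_cong) (rule ext_sum_swap)
  also have "\<dots> = ext_sum (\<lambda>p. ext_sum (\<lambda>s. ext_sum (\<lambda>q. ext_scale (g $$ (s, b) * g $$ (p, a)) (ext_mult (wedge2 p q) (wedge2 q s))) {..<n}) {..<n}) {..<n}"
    by (rule ext_sum_swap)
  also have "\<dots> = ext_sum (\<lambda>(p, s). ext_scale (g $$ (p, a) * g $$ (s, b)) (A2 n p s)) ({..<n} \<times> {..<n})"
    unfolding ext_sum_cart A2_def ext_sum_scale_out by (simp add: mult.commute)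
  finally show "ext_act n g (A2 n a b) = ext_sum (\<lambda>(p, q). ext_scale (g $$ (p, a) * g $$ (q, b)) (A2 n p q)) ({..<n} \<times> {..<n})" .
qed

lemma sum_PiE_two:
  fixes \<Phi> :: "(nat \<Rightarrow> nat) \<Rightarrow> 'a::comm_monoid_add"
  shows "(\<Sum>j'\<in>PiE {..<Suc (Suc m)} (\<lambda>_. I). \<Phi> j') =
         (\<Sum>j\<in>PiE {..<m} (\<lambda>_. I). \<Sum>p\<in>I. \<Sum>q\<in>I. \<Phi> (j(m := p, Suc m := q)))"
proof -
  have "(\<Sum>j\<in>PiE {..<m} (\<lambda>_. I). \<Sum>p\<in>I. \<Sum>q\<in>I. \<Phi> (j(m := p, Suc m := q)))
      = (\<Sum>(j, p, q)\<in>PiE {..<m} (\<lambda>_. I) \<times> (I \<times> I). \<Phi> (j(m := p, Suc m := q)))"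
    by (simp add: sum.cartesian_product)
  also have "\<dots> = (\<Sum>j'\<in>PiE {..<Suc (Suc m)} (\<lambda>_. I). \<Phi> j')"
  proof (rule sum.reindex_bij_witness[where j="\<lambda>(j, p, q). j(m := p, Suc m := q)"
        and i="\<lambda>j'. (restrict j' {..<m}, j' m, j' (Suc m))"])
    fix a assume a: "a \<in> PiE {..<m} (\<lambda>_. I) \<times> (I \<times> I)"
    then obtain j p q where a': "a = (j, p, q)" and j: "j \<in> PiE {..<m} (\<lambda>_. I)" and "p \<in> I" "q \<in> I" by auto
    have "restrict (j(m := p, Suc m := q)) {..<m} = j"
      using j by (auto simp: restrict_def PiE_def extensional_def fun_eq_iff)
    then show "(\<lambda>j'. (restrict j' {..<m}, j' m, j' (Suc m))) ((\<lambda>(j, p, q). j(m := p, Suc m := q)) a) = a"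
      using a' by simp
    show "(\<lambda>(j, p, q). j(m := p, Suc m := q)) a \<in> PiE {..<Suc (Suc m)} (\<lambda>_. I)"
      using a' j \<open>p \<in> I\<close> \<open>q \<in> I\<close> by (auto simp: PiE_def extensional_def Pi_def less_Suc_eq)
  next
    fix b assume b: "b \<in> PiE {..<Suc (Suc m)} (\<lambda>_. I)"
    then show "(\<lambda>(j, p, q). j(m := p, Suc m := q)) ((\<lambda>j'. (restrict j' {..<m}, j' m, j' (Suc m))) b) = b"
      by (auto simp: restrict_def PiE_def extensional_def fun_eq_iff less_Suc_eq not_less)
    show "(\<lambda>j'. (restrict j' {..<m}, j' m, j' (Suc m))) b \<in> PiE {..<m} (\<lambda>_. I) \<times> (I \<times> I)"
      using b by (auto simp: PiE_def Pi_def)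
  qed (auto)
  finally show ?thesis by simp
qed

definition P :: "(nat \<Rightarrow> nat \<Rightarrow> nat \<Rightarrow> ext) \<Rightarrow> nat \<Rightarrow> (nat \<Rightarrow> nat) \<Rightarrow> ext" where
  "P F r i = ext_prod_list (map (\<lambda>k. F k (i (2*k)) (i (2*k+1))) [0..<r])"

lemma P_cong: "(\<And>t. t < 2*r \<Longrightarrow> i t = i' t) \<Longrightarrow> P F r i = P F r i'"
  unfolding P_def by (intro arg_cong[where f=ext_prod_list] map_cong refl) auto

lemma P_Suc: "fin (F r (i (2*r)) (i (2*r+1))) \<Longrightarrow> P F (Suc r) i = ext_mult (P F r i) (F r (i (2*r)) (i (2*r+1)))"
  unfolding P_def by (simp add: prod_append prod_Cons prod_Nil ext_one_right)

lemma prod_cov: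
  assumes cov: "\<And>k. cov n g (F k)"
  shows "(\<And>t. t < 2*r \<Longrightarrow> i t < n) \<Longrightarrow>
    ext_act n g (P F r i) = ext_sum (\<lambda>j. ext_scale (\<Prod>t<2*r. g $$ (j t, i t)) (P F r j)) (PiE {..<2*r} (\<lambda>_. {..<n}))
    \<and> supp n (P F r i)"
proof (induction r arbitrary: i)
  case 0
  show ?case by (simp add: P_def prod_Nil act_one supp_one ext_sum_def)
next
  case (Suc r)
  have it: "\<And>t. t < 2*r \<Longrightarrow> i t < n" using Suc.prems by auto
  note IH = Suc.IH[of i, OF it]
  have a: "i (2*r) < n" and b: "i (2*r+1) < n" using Suc.prems by auto
  note cv = cov[of r, unfolded cov_def, rule_format, OF a b]
  have suppF: "supp n (F r (i (2*r)) (i (2*r+1)))" using cv by simp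
  have PS: "P F (Suc r) i = ext_mult (P F r i) (F r (i (2*r)) (i (2*r+1)))"
    by (rule P_Suc[of F r i, OF supp_fin[OF suppF]])
  have fJ: "finite (PiE {..<2*r} (\<lambda>_. {..<n}))" by (simp add: finite_PiE)
  have f: "finite {..<n}" by simp
  have "ext_act n g (P F (Suc r) i) = ext_mult (ext_act n g (P F r i)) (ext_act n g (F r (i (2*r)) (i (2*r+1))))"
    unfolding PS using IH suppF by (simp add: act_hom)
  also have "\<dots> = ext_sum (\<lambda>j. ext_sum (\<lambda>p. ext_sum (\<lambda>q.
      ext_scale ((\<Prod>t<2*r. g $$ (j t, i t)) * (g $$ (p, i (2*r)) * g $$ (q, i (2*r+1)))) (ext_mult (P F r j) (F r p q))) {..<n}) {..<n})
      (PiE {..<2*r} (\<lambda>_. {..<n}))"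
  proof -
    have e1: "ext_act n g (P F r i) = ext_sum (\<lambda>j. ext_scale (\<Prod>t<2*r. g $$ (j t, i t)) (P F r j)) (PiE {..<2*r} (\<lambda>_. {..<n}))"
      using IH by blast
    have e2: "ext_act n g (F r (i (2*r)) (i (2*r+1))) = ext_sum (\<lambda>p. ext_sum (\<lambda>q. ext_scale (g $$ (p, i (2*r)) * g $$ (q, i (2*r+1))) (F r p q)) {..<n}) {..<n}"
      using cv ext_sum_cart by simp
    have "ext_mult (ext_act n g (P F r i)) (ext_act n g (F r (i (2*r)) (i (2*r+1)))) =
      ext_sum (\<lambda>p. ext_sum (\<lambda>q. ext_sum (\<lambda>j.
      ext_scale (g $$ (p, i (2*r)) * g $$ (q, i (2*r+1)) * (\<Prod>t<2*r. g $$ (j t, i t))) (ext_mult (P F r j) (F r p q)))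
      (PiE {..<2*r} (\<lambda>_. {..<n}))) {..<n}) {..<n}"
      unfolding e1 e2
      by (simp only: ext_mult_sum_left[OF fJ] ext_mult_sum_right[OF f] ext_mult_scale_left ext_mult_scale_right ext_scale_scale ext_sum_scale_out[symmetric])
    also have "\<dots> = ext_sum (\<lambda>p. ext_sum (\<lambda>j. ext_sum (\<lambda>q.
      ext_scale (g $$ (p, i (2*r)) * g $$ (q, i (2*r+1)) * (\<Prod>t<2*r. g $$ (j t, i t))) (ext_mult (P F r j) (F r p q)))
      {..<n}) (PiE {..<2*r} (\<lambda>_. {..<n}))) {..<n}"
      by (rule ext_sum_cong) (rule ext_sum_swap)
    also have "\<dots> = ext_sum (\<lambda>j. ext_sum (\<lambda>p. ext_sum (\<lambda>q.
      ext_scale (g $$ (p, i (2*r)) * g $$ (q, i (2*r+1)) * (\<Prod>t<2*r. g $$ (j t, i t))) (ext_mult (P F r j) (F r p q)))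
      {..<n}) {..<n}) (PiE {..<2*r} (\<lambda>_. {..<n}))"
      by (rule ext_sum_swap)
    finally show ?thesis by (simp only: mult_ac)
  qed
  also have "\<dots> = ext_sum (\<lambda>j. ext_scale (\<Prod>t<2*Suc r. g $$ (j t, i t)) (P F (Suc r) j)) (PiE {..<2*Suc r} (\<lambda>_. {..<n}))"
  proof (rule ext)
    fix S
    have e: "2 * Suc r = Suc (Suc (2*r))" by simp
    show "ext_sum (\<lambda>j. ext_sum (\<lambda>p. ext_sum (\<lambda>q.
      ext_scale ((\<Prod>t<2*r. g $$ (j t, i t)) * (g $$ (p, i (2*r)) * g $$ (q, i (2*r+1)))) (ext_mult (P F r j) (F r p q))) {..<n}) {..<n})
      (PiE {..<2*r} (\<lambda>_. {..<n})) S =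
      ext_sum (\<lambda>j. ext_scale (\<Prod>t<2*Suc r. g $$ (j t, i t)) (P F (Suc r) j)) (PiE {..<2*Suc r} (\<lambda>_. {..<n})) S"
      unfolding ext_sum_def ext_scale_def e sum_PiE_two
    proof (intro sum.cong refl)
      fix j p q assume j: "j \<in> PiE {..<2*r} (\<lambda>_. {..<n})" and p: "p \<in> {..<n}" and q: "q \<in> {..<n}"
      let ?j = "j(2*r := p, Suc (2*r) := q)"
      have Pj: "P F r ?j = P F r j" by (rule P_cong) auto
      have fF: "fin (F r p q)" using cov[of r, unfolded cov_def] p q supp_fin by blast
      have "P F (Suc r) ?j = ext_mult (P F r j) (F r p q)"
        using P_Suc[of F r ?j] fF Pj by simp
      moreover have "(\<Prod>t<Suc (Suc (2*r)). g $$ (?j t, i t)) = (\<Prod>t<2*r. g $$ (j t, i t)) * (g $$ (p, i (2*r)) * g $$ (q, i (2*r+1)))"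
      proof -
        have "(\<Prod>t<2*r. g $$ (?j t, i t)) = (\<Prod>t<2*r. g $$ (j t, i t))" by (rule prod.cong) auto
        then show ?thesis by (simp add: mult_ac)
      qed
      ultimately show "(\<Prod>t<2*r. g $$ (j t, i t)) * (g $$ (p, i (2*r)) * g $$ (q, i (2*r+1))) * ext_mult (P F r j) (F r p q) S =
           (\<Prod>t<Suc (Suc (2*r)). g $$ (?j t, i t)) * P F (Suc r) ?j S" by simp
    qed
  qed
  finally show ?case using IH suppF PS by (simp add: supp_mult)
qed

lemma ext_perm:
  fixes n :: nat and j :: "nat \<Rightarrow> nat"
  assumes j: "j \<in> PiE {..<n} (\<lambda>_. {..<n})" and inj: "inj_on j {..<n}"
  shows "(\<lambda>t. if t < n then j t else t) permutes {..<n}"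
proof (rule bij_imp_permutes)
  let ?s = "\<lambda>t. if t < n then j t else t"
  have inj': "inj_on ?s {..<n}" using inj by (auto simp: inj_on_def)
  have sub: "?s ` {..<n} \<subseteq> {..<n}" using j by (auto simp: PiE_def Pi_def)
  have "?s ` {..<n} = {..<n}" by (rule endo_inj_surj[OF finite_lessThan[of n] sub inj'])
  then show "bij_betw ?s {..<n} {..<n}" using inj' by (simp add: bij_betw_def)
  show "\<And>x. x \<notin> {..<n} \<Longrightarrow> ?s x = x" by simp
qed

lemma D_eq:
  fixes g :: "complex mat"
  assumes g: "g \<in> carrier_mat n n" and j: "j \<in> PiE {..<n} (\<lambda>_. {..<n})"
  shows "(\<Sum>\<sigma>\<in>{\<sigma>. \<sigma> permutes {..<n}}. of_int (sign \<sigma>) * (\<Prod>t<n. g $$ (j t, \<sigma> t)))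
       = (if inj_on j {..<n} then of_int (sign (\<lambda>t. if t < n then j t else t)) * det g else 0)"
proof -
  define M where "M = mat n n (\<lambda>(t, s). g $$ (j t, s))"
  have M: "M \<in> carrier_mat n n" unfolding M_def by simp
  have "det M = (\<Sum>\<sigma>\<in>{\<sigma>. \<sigma> permutes {0..<n}}. of_int (sign \<sigma>) * (\<Prod>t = 0..<n. M $$ (t, \<sigma> t)))"
    by (rule det_def'[OF M])
  also have "\<dots> = (\<Sum>\<sigma>\<in>{\<sigma>. \<sigma> permutes {..<n}}. of_int (sign \<sigma>) * (\<Prod>t<n. g $$ (j t, \<sigma> t)))"
  proof (rule sum.cong)
    show "{\<sigma>. \<sigma> permutes {0..<n}} = {\<sigma>. \<sigma> permutes {..<n}}" by (simp add: atLeast0LessThan)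
  next
    fix \<sigma> assume "\<sigma> \<in> {\<sigma>. \<sigma> permutes {..<n}}"
    then have p: "\<sigma> permutes {..<n}" by simp
    have "(\<Prod>t = 0..<n. M $$ (t, \<sigma> t)) = (\<Prod>t<n. g $$ (j t, \<sigma> t))"
    proof -
      have sx: "\<And>x. x < n \<Longrightarrow> \<sigma> x < n" using permutes_in_image[OF p] by simp
      show ?thesis unfolding atLeast0LessThan M_def
        by (rule prod.cong) (auto simp: sx)
    qed
    then show "of_int (sign \<sigma>) * (\<Prod>t = 0..<n. M $$ (t, \<sigma> t)) = of_int (sign \<sigma>) * (\<Prod>t<n. g $$ (j t, \<sigma> t))" by simp
  qed
  finally have dM: "(\<Sum>\<sigma>\<in>{\<sigma>. \<sigma> permutes {..<n}}. of_int (sign \<sigma>) * (\<Prod>t<n. g $$ (j t, \<sigma> t))) = det M" ..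
  show ?thesis
  proof (cases "inj_on j {..<n}")
    case True
    let ?s = "\<lambda>t. if t < n then j t else t"
    have p: "?s permutes {..<n}" by (rule ext_perm[OF j True])
    then have p0: "?s permutes {0..<n}" by (simp add: atLeast0LessThan)
    have "M = mat n n (\<lambda>(t, s). g $$ (?s t, s))" unfolding M_def by (rule eq_matI) auto
    then have "det M = of_int (sign ?s) * det g" using det_permute_rows[OF g p0] by simp
    then show ?thesis using dM True by simp
  next
    case False
    then obtain t1 t2 where t: "t1 < n" "t2 < n" "t1 \<noteq> t2" "j t1 = j t2" by (auto simp: inj_on_def)
    have "row M t1 = row M t2" unfolding M_def using t by (intro eq_vecI) auto
    then have "det M = 0" using det_identical_rows[OF M t(3) t(1) t(2)] by simp
    then show ?thesis using dM False by simp
  qed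
qed

theorem lemma4p10:
  fixes m :: nat and g :: "complex mat"
  assumes "m \<ge> 1"
    and "g \<in> carrier_mat (2*m) (2*m)"
    and "transpose_mat g * g = 1\<^sub>m (2*m)"
  shows "ext_act (2*m) g (pf m) = ext_scale (det g) (pf m)"
proof -
  define n where "n = 2*m"
  have g: "g \<in> carrier_mat n n" using assms(2) n_def by simp
  have gt: "transpose_mat g \<in> carrier_mat n n" using g by simp
  have ggt: "g * transpose_mat g = 1\<^sub>m n"
    using mat_mult_left_right_inverse[OF gt g] assms(3) n_def by simp
  have orth: "(\<Sum>c<n. g $$ (q, c) * g $$ (r, c)) = (if q = r then 1 else 0)" if "q < n" "r < n" for q r
  proof -
    have "(g * transpose_mat g) $$ (q, r) = (\<Sum>c<n. g $$ (q, c) * g $$ (r, c))"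
      using g that by (simp add: scalar_prod_def atLeast0LessThan)
    then show ?thesis using ggt that by simp
  qed
  define F where "F = (\<lambda>k::nat. if k < m - 1 then A2 n else wedge2)"
  have covF: "cov n g (F k)" for k
    unfolding F_def using cov_A2[OF orth] cov_wedge2 by simp
  have pfP: "ext_mult (ext_prod_list (map (\<lambda>k. A2 (2*m) (\<sigma> (2*k)) (\<sigma> (2*k+1))) [0..<m-1]))
                (wedge2 (\<sigma> (2*m-2)) (\<sigma> (2*m-1))) = P F m \<sigma>" for \<sigma>
  proof -
    have m: "m = Suc (m - 1)" using assms(1) by simp
    have "P F (Suc (m-1)) \<sigma> = ext_mult (P F (m-1) \<sigma>) (F (m-1) (\<sigma> (2*(m-1))) (\<sigma> (2*(m-1)+1)))"
      by (rule P_Suc) (simp add: F_def deg1_fin deg1_wedge2)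
    moreover have "F (m-1) (\<sigma> (2*(m-1))) (\<sigma> (2*(m-1)+1)) = wedge2 (\<sigma> (2*m-2)) (\<sigma> (2*m-1))"
    proof -
      have e1: "2*(m-1) = 2*m-2" and e2: "2*(m-1)+1 = 2*m-1" using assms(1) by auto
      have Fw: "F (m-1) = wedge2" by (simp add: F_def)
      show ?thesis unfolding Fw unfolding e2 unfolding e1 ..
    qed
    moreover have "P F (m-1) \<sigma> = ext_prod_list (map (\<lambda>k. A2 (2*m) (\<sigma> (2*k)) (\<sigma> (2*k+1))) [0..<m-1])"
      unfolding P_def F_def n_def by (intro arg_cong[where f=ext_prod_list] map_cong refl) auto
    ultimately show ?thesis using m by metis
  qed
  have pf: "pf m = ext_sum (\<lambda>\<sigma>. ext_scale (of_int (sign \<sigma>)) (P F m \<sigma>)) {\<sigma>. \<sigma> permutes {..<n}}"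
    unfolding pf_def pfP n_def ..
  let ?Perm = "{\<sigma>. \<sigma> permutes {..<n}}"
  let ?J = "PiE {..<n} (\<lambda>_. {..<n})"
  have fPerm: "finite ?Perm" by (rule finite_permutations) simp
  have fJ: "finite ?J" by (simp add: finite_PiE)
  have nm: "2*m = n" using n_def by simp
  have actP: "ext_act n g (P F m \<sigma>) = ext_sum (\<lambda>j. ext_scale (\<Prod>t<n. g $$ (j t, \<sigma> t)) (P F m j)) ?J"
    if "\<sigma> \<in> ?Perm" for \<sigma>
  proof -
    have "\<And>t. t < 2*m \<Longrightarrow> \<sigma> t < n" using that permutes_in_image[of \<sigma> "{..<n}"] nm by auto
    from prod_cov[where F=F and r=m and i=\<sigma> and n=n and g=g, OF covF this] show ?thesis unfolding nm by blast
  qed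
  define D where "D j = (\<Sum>\<sigma>\<in>?Perm. of_int (sign \<sigma>) * (\<Prod>t<n. g $$ (j t, \<sigma> t)))" for j :: "nat \<Rightarrow> nat"
  show ?thesis
  proof (rule ext)
    fix S
    have "ext_act (2*m) g (pf m) S = (\<Sum>\<sigma>\<in>?Perm. of_int (sign \<sigma>) * (\<Sum>j\<in>?J. (\<Prod>t<n. g $$ (j t, \<sigma> t)) * P F m j S))"
      unfolding nm pf act_sum[OF fPerm] act_scale
      by (simp add: ext_sum_def ext_scale_def actP)
    also have "\<dots> = (\<Sum>j\<in>?J. D j * P F m j S)"
      unfolding D_def by (simp add: sum_distrib_left sum_distrib_right mult_ac sum.swap[of _ ?J])
    also have "\<dots> = (\<Sum>j\<in>?J \<inter> {j. inj_on j {..<n}}. D j * P F m j S)"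
    proof (rule sum.mono_neutral_right[OF fJ])
      show "?J \<inter> {j. inj_on j {..<n}} \<subseteq> ?J" by blast
      show "\<forall>i\<in>?J - ?J \<inter> {j. inj_on j {..<n}}. D i * P F m i S = 0"
        using D_eq[OF g] by (auto simp: D_def)
    qed
    also have "\<dots> = (\<Sum>\<sigma>\<in>?Perm. det g * (of_int (sign \<sigma>) * P F m \<sigma> S))"
    proof (rule sum.reindex_bij_witness[where i="\<lambda>\<sigma>. restrict \<sigma> {..<n}" and j="\<lambda>j t. if t < n then j t else t"])
      fix \<sigma> assume "\<sigma> \<in> ?Perm"
      then have p: "\<sigma> permutes {..<n}" by simp
      show "(\<lambda>t. if t < n then restrict \<sigma> {..<n} t else t) = \<sigma>"
        using permutes_not_in[OF p] by (auto simp: fun_eq_iff)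
      show "restrict \<sigma> {..<n} \<in> ?J \<inter> {j. inj_on j {..<n}}"
        using permutes_in_image[OF p] permutes_inj_on[OF p, of "{..<n}"] by (auto simp: inj_on_def)
    next
      fix j assume "j \<in> ?J \<inter> {j. inj_on j {..<n}}"
      then have j: "j \<in> ?J" and inj: "inj_on j {..<n}" by auto
      show "restrict (\<lambda>t. if t < n then j t else t) {..<n} = j"
        using j by (auto simp: restrict_def PiE_def extensional_def fun_eq_iff)
      show "(\<lambda>t. if t < n then j t else t) \<in> ?Perm" using ext_perm[OF j inj] by simp
      have Peq: "P F m (\<lambda>t. if t < n then j t else t) = P F m j" by (rule P_cong) (simp add: nm)
      have "D j = of_int (sign (\<lambda>t. if t < n then j t else t)) * det g"
        unfolding D_def using D_eq[OF g j] inj by simp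
      then show "det g * (of_int (sign (\<lambda>t. if t < n then j t else t)) * P F m (\<lambda>t. if t < n then j t else t) S) = D j * P F m j S"
        using Peq by simp
    qed
    also have "\<dots> = ext_scale (det g) (pf m) S"
      unfolding pf by (simp add: ext_scale_def ext_sum_def sum_distrib_left)
    finally show "ext_act (2*m) g (pf m) S = ext_scale (det g) (pf m) S" .
  qed
qed

end
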